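(* Let $(h,i)\in\mathbb D$ and let $\phi=\phi_h^{(i)}$. Then $$\chi_h^{(i)}\circ\phi=\big(\chi_{h+1}^{(2i-1)}+\chi_{h+1}^{(2i)}\big)/\sqrt2,$$ $$\chi_{h+1}^{(2i-1)}\circ\phi=\big(\sqrt2\chi_h^{(i)}+\chi_{h+1}^{(2i-1)}-\chi_{h+1}^{(2i)}\big)/2,$$ $$\chi_{h+1}^{(2i)}\circ\phi=\big(\sqrt2\chi_h^{(i)}-\chi_{h+1}^{(2i-1)}+\chi_{h+1}^{(2i)}\big)/2.$$ Moreover, $\chi_k^{(j)}\circ\phi=\chi_k^{(j+2^{k-h-2})}$ if $(k,j)\in\mathbb S_1$ and $\chi_k^{(j)}\circ\phi=\chi_k^{(j-2^{k-h-2})}$ if $(k,j)\in\mathbb S_2$. All remaining Haar functions $\chi_k^{(j)}$, $(k,j)\in\mathbb D\setminus(\{(h,i),(h+1,2i-1),(h+1,2i)\}\cup\mathbb S_1\cup\mathbb S_2)$, satisfy $\chi_k^{(j)}\circ\phi=\chi_k^{(j)}$.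
   Context: Dyadic intervals: $\Delta_k^{(j)}:=[\frac{j-1}{2^k},\frac{j}{2^k})$ for $k\ge0$. Haar functions: for $k\ge1$, integer $j$, $\chi_k^{(j)}(t)=+2^{(k-1)/2}$ on $\Delta_k^{(2j-1)}$, $-2^{(k-1)/2}$ on $\Delta_k^{(2j)}$, $0$ otherwise, $t\in[0,1)$. Dyadic tree $\mathbb D:=\{(k,j):k\ge1;\ j=1,\dots,2^{k-1}\}$. For $(h,i)\in\mathbb D$, $\phi_h^{(i)}:[0,1)\to[0,1)$ is defined by $\phi_h^{(i)}(t)=t+2^{-(h+1)}$ for $t\in\Delta_{h+1}^{(4i-2)}$, $\phi_h^{(i)}(t)=t-2^{-(h+1)}$ for $t\in\Delta_{h+1}^{(4i-1)}$, and $\phi_h^{(i)}(t)=t$ otherwise (it interchanges these two intervals). Subtrees: $\mathbb S_1:=\{(k,j)\in\mathbb D:\Delta_{k-1}^{(j)}\subseteq\Delta_{h+1}^{(4i-2)}\}$ and $\mathbb S_2:=\{(k,j)\in\mathbb D:\Delta_{k-1}^{(j)}\subseteq\Delta_{h+1}^{(4i-1)}\}$. *)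

theory Defs
  imports Complex_Main
begin

definition dyint :: "nat \<Rightarrow> int \<Rightarrow> real set" where
  "dyint k j = {real_of_int (j - 1) / 2 ^ k ..< real_of_int j / 2 ^ k}"

text \<open>Haar function chi_k^(j) on [0,1) (set to 0 outside [0,1)); intended for k >= 1.\<close>
definition haar :: "nat \<Rightarrow> int \<Rightarrow> real \<Rightarrow> real" where
  "haar k j t =
     (if t \<in> {0..<1} \<and> t \<in> dyint k (2 * j - 1) then 2 powr ((real k - 1) / 2)
      else if t \<in> {0..<1} \<and> t \<in> dyint k (2 * j) then - (2 powr ((real k - 1) / 2))
      else 0)"

definition dtree :: "(nat \<times> int) set" where
  "dtree = {(k, j). k \<ge> 1 \<and> 1 \<le> j \<and> j \<le> 2 ^ (k - 1)}"

definition phi :: "nat \<Rightarrow> int \<Rightarrow> real \<Rightarrow> real" where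
  "phi h i t =
     (if t \<in> dyint (h + 1) (4 * i - 2) then t + 1 / 2 ^ (h + 1)
      else if t \<in> dyint (h + 1) (4 * i - 1) then t - 1 / 2 ^ (h + 1)
      else t)"

definition S1 :: "nat \<Rightarrow> int \<Rightarrow> (nat \<times> int) set" where
  "S1 h i = {(k, j) \<in> dtree. dyint (k - 1) j \<subseteq> dyint (h + 1) (4 * i - 2)}"

definition S2 :: "nat \<Rightarrow> int \<Rightarrow> (nat \<times> int) set" where
  "S2 h i = {(k, j) \<in> dtree. dyint (k - 1) j \<subseteq> dyint (h + 1) (4 * i - 1)}"

end

theory Submission
  imports Defs
begin

lemma mem_dyint:
  assumes "m \<le> K"
  shows "t \<in> dyint m j \<longleftrightarrow> \<lfloor>t * 2^K\<rfloor> div 2^(K-m) = j - 1"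
proof -
  have 1: "t \<in> dyint m j \<longleftrightarrow> \<lfloor>t*2^m\<rfloor> = j-1"
    unfolding dyint_def by (simp add: floor_eq_iff pos_divide_le_eq pos_less_divide_eq)
  have e: "(2::real)^K = 2^m * 2^(K-m)" using assms by (simp add: power_add[symmetric])
  have "t*2^m = (t*2^K) / real_of_int (2^(K-m))" by (simp add: e)
  then have "\<lfloor>t*2^m\<rfloor> = \<lfloor>t * 2^K\<rfloor> div 2^(K-m)"
    by (simp add: floor_divide_real_eq_div del: of_int_power)
  with 1 show ?thesis by simp
qed

lemma haar_fl:
  assumes "k \<le> K" "0 \<le> t" "t < 1"
  shows "haar k j t = (if \<lfloor>t * 2^K\<rfloor> div 2^(K-k) = 2*j-2 then 2 powr ((real k - 1) / 2)
     else if \<lfloor>t * 2^K\<rfloor> div 2^(K-k) = 2*j-1 then - (2 powr ((real k - 1) / 2)) else 0)"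
  using assms unfolding haar_def by (simp add: mem_dyint[OF assms(1)])

lemma aux1: "0 < (Q::real) \<Longrightarrow> 0 < D \<Longrightarrow> a/Q \<le> b/(Q*D) \<longleftrightarrow> a*D \<le> b"
  by (simp add: field_simps)
lemma aux2: "0 < (Q::real) \<Longrightarrow> 0 < D \<Longrightarrow> b/(Q*D) \<le> a/Q \<longleftrightarrow> b \<le> a * D"
  by (simp add: field_simps)

lemma dyint_sub_le:
  assumes "q \<le> p"
  shows "dyint p j \<subseteq> dyint q l \<longleftrightarrow> (l-1)*2^(p-q) \<le> j-1 \<and> j \<le> l*2^(p-q)"
proof -
  have e: "(2::real)^p = 2^q * 2^(p-q)" using assms by (simp add: power_add[symmetric])
  have ne: "real_of_int (j - 1) / 2 ^ p < real_of_int j / 2 ^ p" by (simp add: divide_strict_right_mono)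
  have "dyint p j \<subseteq> dyint q l \<longleftrightarrow> real_of_int (l - 1) / 2 ^ q \<le> real_of_int (j - 1) / 2 ^ p
      \<and> real_of_int j / 2 ^ p \<le> real_of_int l / 2 ^ q"
    unfolding dyint_def using ne atLeastLessThan_subset_iff[of "real_of_int (j - 1) / 2 ^ p"]
    by auto
  also have "\<dots> \<longleftrightarrow> real_of_int ((l-1)*2^(p-q)) \<le> real_of_int (j-1) \<and> real_of_int j \<le> real_of_int (l*2^(p-q))"
    using aux1[of "2^q" "2^(p-q)" "real_of_int (l-1)" "real_of_int (j-1)"]
          aux2[of "2^q" "2^(p-q)" "real_of_int j" "real_of_int l"] by (simp add: e mult.commute)
  also have "\<dots> \<longleftrightarrow> (l-1)*2^(p-q) \<le> j-1 \<and> j \<le> l*2^(p-q)" by linarith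
  finally show ?thesis .
qed

lemma dyint_sub_lt:
  assumes "p < q" shows "\<not> dyint p j \<subseteq> dyint q l"
proof
  assume s: "dyint p j \<subseteq> dyint q l"
  have ne: "real_of_int (j - 1) / 2 ^ p < real_of_int j / 2 ^ p" by (simp add: divide_strict_right_mono)
  have "real_of_int (l - 1) / 2 ^ q \<le> real_of_int (j - 1) / 2 ^ p
      \<and> real_of_int j / 2 ^ p \<le> real_of_int l / 2 ^ q"
    using s unfolding dyint_def using ne atLeastLessThan_subset_iff[of "real_of_int (j - 1) / 2 ^ p"]
    by auto
  then have "1 / (2::real)^p \<le> 1/2^q" by (simp add: diff_divide_distrib)
  then have "(2::real)^q \<le> 2^p" by (simp add: divide_le_eq)
  then have "q \<le> p" by simp
  with assms show False by simp
qed

lemma i_bound: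
  assumes "(h, i) \<in> dtree" shows "1 \<le> h" "1 \<le> i" "4*i \<le> 2^(h+1)"
proof -
  show h1: "1 \<le> h" "1 \<le> i" using assms by (auto simp: dtree_def)
  have "(2::int)^(h+1) = 4*2^(h-1)" using h1 by (cases h) auto
  then show "4*i \<le> 2^(h+1)" using assms by (auto simp: dtree_def)
qed

lemma phi_props:
  assumes hi: "(h, i) \<in> dtree" and t: "0 \<le> t" "t < 1" and K: "h + 1 \<le> K"
  shows "0 \<le> phi h i t \<and> phi h i t < 1 \<and>
    \<lfloor>phi h i t * 2^K\<rfloor> = (if \<lfloor>t*2^K\<rfloor> div 2^(K-(h+1)) = 4*i-3 then \<lfloor>t*2^K\<rfloor> + 2^(K-(h+1))
       else if \<lfloor>t*2^K\<rfloor> div 2^(K-(h+1)) = 4*i-2 then \<lfloor>t*2^K\<rfloor> - 2^(K-(h+1)) else \<lfloor>t*2^K\<rfloor>)"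
proof -
  have e: "(2::real)^K = 2^(h+1) * 2^(K-(h+1))" using K by (metis le_add_diff_inverse power_add)
  have ib: "real_of_int (4*i) \<le> 2^(h+1)" using i_bound(3)[OF hi]
    by (metis of_int_le_iff of_int_numeral of_int_power)
  have i1: "1 \<le> i" using i_bound[OF hi] by simp
  have sh1: "(t + 1 / 2^(h+1)) * 2^K = t*2^K + real_of_int (2^(K-(h+1)))" by (simp add: e field_simps)
  have sh2: "(t - 1 / 2^(h+1)) * 2^K = t*2^K - real_of_int (2^(K-(h+1)))" by (simp add: e field_simps)
  show ?thesis
  proof (cases "t \<in> dyint (h + 1) (4 * i - 2)")
    case True
    then have "t < real_of_int (4*i-2) / 2^(h+1)" by (simp add: dyint_def)
    moreover have "real_of_int (4*i-1)/2^(h+1) = real_of_int(4*i-2)/2^(h+1) + 1/2^(h+1)"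
      by (simp add: add_divide_distrib[symmetric])
    ultimately have "t + 1 / 2^(h+1) < real_of_int (4*i-1) / 2^(h+1)" by linarith
    also have "\<dots> \<le> 1" using ib by (simp add: field_simps)
    finally have b: "t + 1 / 2^(h+1) < 1" .
    have p: "phi h i t = t + 1 / 2^(h+1)" using True unfolding phi_def by simp
    have d: "\<lfloor>t*2^K\<rfloor> div 2^(K-(h+1)) = 4*i-3" using True mem_dyint[OF K] by simp
    have f: "\<lfloor>phi h i t * 2^K\<rfloor> = \<lfloor>t*2^K\<rfloor> + 2^(K-(h+1))"
      unfolding p sh1 by (rule floor_add_int[symmetric])
    show ?thesis using f d b t p by simp 
  next
    case F: False
    show ?thesis
    proof (cases "t \<in> dyint (h + 1) (4 * i - 1)")
      case True
      then have "real_of_int (4*i-2) / 2^(h+1) \<le> t" by (simp add: dyint_def)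
      moreover have "real_of_int (4*i-2)/2^(h+1) = real_of_int(4*i-3)/2^(h+1) + 1/2^(h+1)"
        by (simp add: add_divide_distrib[symmetric])
      ultimately have "real_of_int (4*i-3) / 2^(h+1) \<le> t - 1 / 2^(h+1)" by linarith
      moreover have "0 \<le> real_of_int (4*i-3) / 2^(h+1)" using i1 by simp
      ultimately have b: "0 \<le> t - 1 / 2^(h+1)" by linarith
      have p: "phi h i t = t - 1 / 2^(h+1)" using True F unfolding phi_def by simp
      have d: "\<lfloor>t*2^K\<rfloor> div 2^(K-(h+1)) = 4*i-2" using True mem_dyint[OF K] by simp
      have d2: "\<lfloor>t*2^K\<rfloor> div 2^(K-(h+1)) \<noteq> 4*i-3" using d by simp
      have f: "\<lfloor>phi h i t * 2^K\<rfloor> = \<lfloor>t*2^K\<rfloor> - 2^(K-(h+1))"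
        unfolding p sh2 by (rule floor_diff_of_int)
      have "t - 1 / 2^(h+1) < 1" proof - have "0 \<le> 1 / (2::real)^(h+1)" by simp then show ?thesis using t by linarith qed
      then show ?thesis using f d d2 b t p by simp 
    next
      case False
      have p: "phi h i t = t" using False F unfolding phi_def by simp
      have d: "\<lfloor>t*2^K\<rfloor> div 2^(K-(h+1)) \<noteq> 4*i-2" "\<lfloor>t*2^K\<rfloor> div 2^(K-(h+1)) \<noteq> 4*i-3"
        using False F mem_dyint[OF K] by auto
      show ?thesis using d t p by simp 
    qed
  qed
qed


lemma divblock: "0 < (b::int) \<Longrightarrow> n div b = q \<longleftrightarrow> q*b \<le> n \<and> n < q*b + b"
proof
  assume b: "0 < b"
  {
    assume "n div b = q"
    moreover have "n = b * (n div b) + n mod b" by simp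
    moreover have "0 \<le> n mod b" "n mod b < b" using b by simp_all
    ultimately show "q*b \<le> n \<and> n < q*b + b" by (simp add: mult.commute)
  }
  assume "q*b \<le> n \<and> n < q*b + b"
  then show "n div b = q" by (intro int_div_pos_eq[where r = "n - b*q"]) (auto simp: mult.commute)
qed

lemma S1_int:
  fixes a i j n m :: int
  assumes a: "0 < a" and j: "(4*i-3)*a \<le> j-1" "j \<le> (4*i-2)*a"
    and m: "m = (if n div (2*a) = 4*i-3 then n+2*a else if n div (2*a) = 4*i-2 then n-2*a else n)"
  shows "(m = 2*j-2 \<longleftrightarrow> n = 2*(j+a)-2) \<and> (m = 2*j-1 \<longleftrightarrow> n = 2*(j+a)-1)"
proof -
  have a2: "0 < 2*a" using a by simp
  note d = divblock[OF a2]
  show ?thesis using j unfolding m d by (auto simp: algebra_simps)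
qed

lemma S2_int:
  fixes a i j n m :: int
  assumes a: "0 < a" and j: "(4*i-2)*a \<le> j-1" "j \<le> (4*i-1)*a"
    and m: "m = (if n div (2*a) = 4*i-3 then n+2*a else if n div (2*a) = 4*i-2 then n-2*a else n)"
  shows "(m = 2*j-2 \<longleftrightarrow> n = 2*(j-a)-2) \<and> (m = 2*j-1 \<longleftrightarrow> n = 2*(j-a)-1)"
proof -
  have a2: "0 < 2*a" using a by simp
  note d = divblock[OF a2]
  show ?thesis using j unfolding m d by (auto simp: algebra_simps)
qed

lemma R_int:
  fixes a i j n m :: int
  assumes a: "0 < a" and j: "\<not> ((4*i-3)*a \<le> j-1 \<and> j \<le> (4*i-2)*a)" "\<not> ((4*i-2)*a \<le> j-1 \<and> j \<le> (4*i-1)*a)"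
    and m: "m = (if n div (2*a) = 4*i-3 then n+2*a else if n div (2*a) = 4*i-2 then n-2*a else n)"
  shows "(m = 2*j-2 \<longleftrightarrow> n = 2*j-2) \<and> (m = 2*j-1 \<longleftrightarrow> n = 2*j-1)"
proof -
  have a2: "0 < 2*a" using a by simp
  note d = divblock[OF a2]
  show ?thesis using j unfolding m d by (auto simp: algebra_simps)
qed

lemma R1_int:
  fixes i j n m :: int
  assumes "j \<noteq> 2*i-1" "j \<noteq> 2*i"
    and m: "m = (if n div 1 = 4*i-3 then n+1 else if n div 1 = 4*i-2 then n-1 else n)"
  shows "(m = 2*j-2 \<longleftrightarrow> n = 2*j-2) \<and> (m = 2*j-1 \<longleftrightarrow> n = 2*j-1)"
  using assms by auto

lemma R0_int:
  fixes i j n m :: int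
  assumes "j \<noteq> i"
    and m: "m = (if n div 1 = 4*i-3 then n+1 else if n div 1 = 4*i-2 then n-1 else n)"
  shows "(m div 2 = 2*j-2 \<longleftrightarrow> n div 2 = 2*j-2) \<and> (m div 2 = 2*j-1 \<longleftrightarrow> n div 2 = 2*j-1)"
proof -
  have m': "m = (if n = 4*i-3 then n+1 else if n = 4*i-2 then n-1 else n)" using m by simp
  consider "n = 4*i-3" "m = 4*i-2" | "n = 4*i-2" "m = 4*i-3" | "m = n"
    using m' by (cases "n = 4*i-3"; cases "n = 4*i-2") auto
  then show ?thesis
  proof cases
    case 1
    have a: "n div 2 = 2*i-2" unfolding 1 by (rule int_div_pos_eq[where r=1]) auto
    have b: "m div 2 = 2*i-1" unfolding 1 by (rule int_div_pos_eq[where r=0]) auto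
    show ?thesis unfolding a b using assms(1) by presburger
  next
    case 2
    have a: "m div 2 = 2*i-2" unfolding 2 by (rule int_div_pos_eq[where r=1]) auto
    have b: "n div 2 = 2*i-1" unfolding 2 by (rule int_div_pos_eq[where r=0]) auto
    show ?thesis unfolding a b using assms(1) by presburger
  next
    case 3
    then show ?thesis by simp
  qed
qed

lemma Rm_int:
  fixes i n m :: int
  assumes m: "m = (if n div 1 = 4*i-3 then n+1 else if n div 1 = 4*i-2 then n-1 else n)"
  shows "m div 4 = n div 4"
proof -
  have m': "m = (if n = 4*i-3 then n+1 else if n = 4*i-2 then n-1 else n)" using m by simp
  consider "n = 4*i-3" "m = 4*i-2" | "n = 4*i-2" "m = 4*i-3" | "m = n"
    using m' by (cases "n = 4*i-3"; cases "n = 4*i-2") auto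
  then show ?thesis
  proof cases
    case 1
    have a: "n div 4 = i-1" unfolding 1 by (rule int_div_pos_eq[where r=1]) auto
    have b: "m div 4 = i-1" unfolding 1 by (rule int_div_pos_eq[where r=2]) auto
    show ?thesis unfolding a b ..
  next
    case 2
    have a: "m div 4 = i-1" unfolding 2 by (rule int_div_pos_eq[where r=1]) auto
    have b: "n div 4 = i-1" unfolding 2 by (rule int_div_pos_eq[where r=2]) auto
    show ?thesis unfolding a b ..
  next
    case 3
    then show ?thesis by simp
  qed
qed


lemma cst: "2 powr ((real (h+1) - 1)/2) = sqrt 2 * 2 powr ((real h - 1)/2)"
proof -
  have "2 powr ((real (h+1) - 1)/2) = 2 powr (1/2) * 2 powr ((real h - 1)/2)"
    by (simp add: powr_add[symmetric] field_simps)
  then show ?thesis by (simp add: powr_half_sqrt)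
qed

lemma part123:
  assumes hi: "(h, i) \<in> dtree" and t: "0 \<le> t" "t < 1"
  shows "haar h i (phi h i t)
        = (haar (h + 1) (2 * i - 1) t + haar (h + 1) (2 * i) t) / sqrt 2
  \<and> haar (h + 1) (2 * i - 1) (phi h i t)
        = (sqrt 2 * haar h i t + haar (h + 1) (2 * i - 1) t - haar (h + 1) (2 * i) t) / 2
  \<and> haar (h + 1) (2 * i) (phi h i t)
        = (sqrt 2 * haar h i t - haar (h + 1) (2 * i - 1) t + haar (h + 1) (2 * i) t) / 2"
proof -
  define n where "n = \<lfloor>t*2^(h+1)\<rfloor>"
  define m where "m = \<lfloor>phi h i t*2^(h+1)\<rfloor>"
  define c where "c = 2 powr ((real h - 1)/2)"
  have P: "0 \<le> phi h i t" "phi h i t < 1" "m = (if n = 4*i-3 then n+1 else if n = 4*i-2 then n-1 else n)"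
    using phi_props[OF hi t le_refl] unfolding m_def n_def by auto
  have Kh: "h \<le> h+1" by simp
  have e1: "Suc h - h = 1" by simp
  have H: "\<And>s j. 0 \<le> s \<Longrightarrow> s < 1 \<Longrightarrow> haar h j s = (if \<lfloor>s*2^(h+1)\<rfloor> div 2 = 2*j-2 then c
      else if \<lfloor>s*2^(h+1)\<rfloor> div 2 = 2*j-1 then -c else 0)"
    using haar_fl[OF Kh] unfolding c_def by (simp add: e1)
  have cc: "2 powr ((real (h+1) - 1)/2) = sqrt 2 * c" unfolding c_def by (rule cst)
  have H1: "\<And>s j. 0 \<le> s \<Longrightarrow> s < 1 \<Longrightarrow> haar (h+1) j s = (if \<lfloor>s*2^(h+1)\<rfloor> = 2*j-2 then sqrt 2 * c
      else if \<lfloor>s*2^(h+1)\<rfloor> = 2*j-1 then - (sqrt 2 * c) else 0)"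
  proof -
    fix s j assume s: "0 \<le> (s::real)" "s < 1"
    show "?thesis s j" using haar_fl[of "h+1" "h+1" s j, OF le_refl s] unfolding cc by simp
  qed
  note HH = H[OF P(1,2)] H[OF t] H1[OF P(1,2)] H1[OF t]
  note HH' = HH[folded m_def n_def]
  consider "n = 4*i-4" | "n = 4*i-3" | "n = 4*i-2" | "n = 4*i-1" | "n < 4*i-4 \<or> 4*i-1 < n" by linarith
  then show ?thesis
  proof cases
    case 1
    then have "m = n" "n div 2 = 2*i-2" using P(3) by auto
    then show ?thesis using 1 unfolding HH' by simp
  next
    case 2
    then have "m = 4*i-2" "n div 2 = 2*i-2" "m div 2 = 2*i-1" using P(3) by auto
    then show ?thesis using 2 unfolding HH' by simp
  next
    case 3
    then have "m = 4*i-3" "n div 2 = 2*i-1" "m div 2 = 2*i-2" using P(3) by auto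
    then show ?thesis using 3 unfolding HH' by simp
  next
    case 4
    then have "m = n" "n div 2 = 2*i-1" using P(3) by auto
    then show ?thesis using 4 unfolding HH' by simp
  next
    case 5
    then have "m = n" "n div 2 \<noteq> 2*i-1" "n div 2 \<noteq> 2*i-2" using P(3) by auto
    then show ?thesis using 5 unfolding HH' by auto
  qed
qed



lemma big_setup:
  assumes hi: "(h, i) \<in> dtree" and t: "0 \<le> t" "t < 1" and hk: "h + 2 \<le> k"
  shows "0 \<le> phi h i t \<and> phi h i t < 1 \<and> \<lfloor>phi h i t * 2^k\<rfloor> =
    (if \<lfloor>t*2^k\<rfloor> div (2*2^(k-h-2)) = 4*i-3 then \<lfloor>t*2^k\<rfloor> + 2*2^(k-h-2)
       else if \<lfloor>t*2^k\<rfloor> div (2*2^(k-h-2)) = 4*i-2 then \<lfloor>t*2^k\<rfloor> - 2*2^(k-h-2) else \<lfloor>t*2^k\<rfloor>)"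
proof -
  have e: "k - (h+1) = Suc (k-h-2)" using hk by simp
  have "(2::int)^(k-(h+1)) = 2*2^(k-h-2)" unfolding e by simp
  then show ?thesis using phi_props[OF hi t, of k] hk by simp
qed

lemma haar_k:
  assumes "0 \<le> t" "t < 1"
  shows "haar k j t = (if \<lfloor>t * 2^k\<rfloor> = 2*j-2 then 2 powr ((real k - 1) / 2)
     else if \<lfloor>t * 2^k\<rfloor> = 2*j-1 then - (2 powr ((real k - 1) / 2)) else 0)"
  using haar_fl[OF le_refl assms] by simp

lemma partS1:
  assumes hi: "(h, i) \<in> dtree" and kj: "(k, j) \<in> S1 h i" and t: "0 \<le> t" "t < 1"
  shows "haar k j (phi h i t) = haar k (j + 2 ^ (k - h - 2)) t"
proof -
  have k1: "1 \<le> k" and sub: "dyint (k-1) j \<subseteq> dyint (h+1) (4*i-2)"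
    using kj by (auto simp: S1_def dtree_def)
  have hk1: "h+1 \<le> k-1" using dyint_sub_lt sub by (metis not_le)
  then have hk: "h + 2 \<le> k" by simp
  have ee: "k - 1 - (h+1) = k-h-2" by simp
  define a :: int where "a = 2^(k-h-2)"
  have a0: "0 < a" unfolding a_def by simp
  have jb: "(4*i-3)*a \<le> j-1" "j \<le> (4*i-2)*a"
    using sub unfolding dyint_sub_le[OF hk1] ee a_def by auto
  have P: "0 \<le> phi h i t" "phi h i t < 1" "\<lfloor>phi h i t * 2^k\<rfloor> =
    (if \<lfloor>t*2^k\<rfloor> div (2*a) = 4*i-3 then \<lfloor>t*2^k\<rfloor> + 2*a
       else if \<lfloor>t*2^k\<rfloor> div (2*a) = 4*i-2 then \<lfloor>t*2^k\<rfloor> - 2*a else \<lfloor>t*2^k\<rfloor>)"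
    using big_setup[OF hi t hk] unfolding a_def by auto
  note I = S1_int[OF a0 jb P(3)]
  show ?thesis unfolding haar_k[OF P(1,2)] haar_k[OF t] a_def[symmetric] using I by (simp add: ring_distribs)
qed

lemma partS2:
  assumes hi: "(h, i) \<in> dtree" and kj: "(k, j) \<in> S2 h i" and t: "0 \<le> t" "t < 1"
  shows "haar k j (phi h i t) = haar k (j - 2 ^ (k - h - 2)) t"
proof -
  have k1: "1 \<le> k" and sub: "dyint (k-1) j \<subseteq> dyint (h+1) (4*i-1)"
    using kj by (auto simp: S2_def dtree_def)
  have hk1: "h+1 \<le> k-1" using dyint_sub_lt sub by (metis not_le)
  then have hk: "h + 2 \<le> k" by simp
  have ee: "k - 1 - (h+1) = k-h-2" by simp
  define a :: int where "a = 2^(k-h-2)"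
  have a0: "0 < a" unfolding a_def by simp
  have jb: "(4*i-2)*a \<le> j-1" "j \<le> (4*i-1)*a"
    using sub unfolding dyint_sub_le[OF hk1] ee a_def by auto
  have P: "0 \<le> phi h i t" "phi h i t < 1" "\<lfloor>phi h i t * 2^k\<rfloor> =
    (if \<lfloor>t*2^k\<rfloor> div (2*a) = 4*i-3 then \<lfloor>t*2^k\<rfloor> + 2*a
       else if \<lfloor>t*2^k\<rfloor> div (2*a) = 4*i-2 then \<lfloor>t*2^k\<rfloor> - 2*a else \<lfloor>t*2^k\<rfloor>)"
    using big_setup[OF hi t hk] unfolding a_def by auto
  note I = S2_int[OF a0 jb P(3)]
  show ?thesis unfolding haar_k[OF P(1,2)] haar_k[OF t] a_def[symmetric] using I by (simp add: ring_distribs)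
qed


lemma partR:
  assumes hi: "(h, i) \<in> dtree" and kj: "(k, j) \<in> dtree"
    and nS: "(k, j) \<notin> S1 h i" "(k, j) \<notin> S2 h i"
    and ne: "(k, j) \<noteq> (h, i)" "(k, j) \<noteq> (h+1, 2*i-1)" "(k, j) \<noteq> (h+1, 2*i)"
    and t: "0 \<le> t" "t < 1"
  shows "haar k j (phi h i t) = haar k j t"
proof -
  have k1: "1 \<le> k" using kj by (auto simp: dtree_def)
  have Q: "0 \<le> phi h i t" "phi h i t < 1"
    using phi_props[OF hi t le_refl] by auto
  define n where "n = \<lfloor>t*2^(h+1)\<rfloor>"
  define m where "m = \<lfloor>phi h i t*2^(h+1)\<rfloor>"
  have M: "m = (if n div 1 = 4*i-3 then n+1 else if n div 1 = 4*i-2 then n-1 else n)"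
    using phi_props[OF hi t le_refl] unfolding m_def n_def by auto
  consider "h + 2 \<le> k" | "k = h + 1" | "k = h" | "k < h" by linarith
  then show ?thesis
  proof cases
    case 1
    then have hk1: "h+1 \<le> k-1" by simp
    have ee: "k - 1 - (h+1) = k-h-2" by simp
    define a :: int where "a = 2^(k-h-2)"
    have a0: "0 < a" unfolding a_def by simp
    have s1: "\<not> dyint (k-1) j \<subseteq> dyint (h+1) (4*i-2)" using nS(1) kj by (auto simp: S1_def)
    have s2: "\<not> dyint (k-1) j \<subseteq> dyint (h+1) (4*i-1)" using nS(2) kj by (auto simp: S2_def)
    have jb: "\<not> ((4*i-3)*a \<le> j-1 \<and> j \<le> (4*i-2)*a)" "\<not> ((4*i-2)*a \<le> j-1 \<and> j \<le> (4*i-1)*a)"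
      using s1 s2 unfolding dyint_sub_le[OF hk1] ee a_def by auto
    have P: "0 \<le> phi h i t" "phi h i t < 1" "\<lfloor>phi h i t * 2^k\<rfloor> =
      (if \<lfloor>t*2^k\<rfloor> div (2*a) = 4*i-3 then \<lfloor>t*2^k\<rfloor> + 2*a
         else if \<lfloor>t*2^k\<rfloor> div (2*a) = 4*i-2 then \<lfloor>t*2^k\<rfloor> - 2*a else \<lfloor>t*2^k\<rfloor>)"
      using big_setup[OF hi t 1] unfolding a_def by auto
    note I = R_int[OF a0 jb P(3)]
    show ?thesis unfolding haar_k[OF P(1,2)] haar_k[OF t] using I by simp
  next
    case 2
    have j: "j \<noteq> 2*i-1" "j \<noteq> 2*i" using ne 2 by auto
    note I = R1_int[OF j M]
    show ?thesis unfolding 2 haar_k[OF Q] haar_k[OF t] using I[unfolded m_def n_def] by simp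
  next
    case 3
    have j: "j \<noteq> i" using ne 3 by auto
    note I = R0_int[OF j M]
    have Kh: "h \<le> h+1" by simp
    have e1: "Suc h - h = 1" by simp
    show ?thesis unfolding 3 haar_fl[OF Kh Q] haar_fl[OF Kh t] using I[unfolded m_def n_def]
      by (simp add: e1)
  next
    case 4
    have Kh: "k \<le> h+1" using 4 by simp
    have e: "(2::int)^(h+1-k) = 4 * 2^(h-1-k)"
    proof -
      have "h+1-k = Suc (Suc (h-1-k))" using 4 by simp
      then show ?thesis by simp
    qed
    have D: "\<And>x::int. x div 2^(h+1-k) = x div 4 div 2^(h-1-k)"
      unfolding e by (simp add: zdiv_zmult2_eq)
    have I: "m div 4 = n div 4" by (rule Rm_int[OF M])
    show ?thesis unfolding haar_fl[OF Kh Q] haar_fl[OF Kh t] D using I[unfolded m_def n_def]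
      by simp
  qed
qed

theorem lemma3p3:
  fixes h :: nat and i :: int
  assumes hi: "(h, i) \<in> dtree"
  shows
   "(\<forall>t\<in>{0..<1::real}. haar h i (phi h i t)
        = (haar (h + 1) (2 * i - 1) t + haar (h + 1) (2 * i) t) / sqrt 2)
  \<and> (\<forall>t\<in>{0..<1::real}. haar (h + 1) (2 * i - 1) (phi h i t)
        = (sqrt 2 * haar h i t + haar (h + 1) (2 * i - 1) t - haar (h + 1) (2 * i) t) / 2)
  \<and> (\<forall>t\<in>{0..<1::real}. haar (h + 1) (2 * i) (phi h i t)
        = (sqrt 2 * haar h i t - haar (h + 1) (2 * i - 1) t + haar (h + 1) (2 * i) t) / 2)
  \<and> (\<forall>(k, j)\<in>S1 h i. \<forall>t\<in>{0..<1::real}.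
        haar k j (phi h i t) = haar k (j + 2 ^ (k - h - 2)) t)
  \<and> (\<forall>(k, j)\<in>S2 h i. \<forall>t\<in>{0..<1::real}.
        haar k j (phi h i t) = haar k (j - 2 ^ (k - h - 2)) t)
  \<and> (\<forall>(k, j)\<in>dtree - ({(h, i), (h + 1, 2 * i - 1), (h + 1, 2 * i)} \<union> S1 h i \<union> S2 h i).
        \<forall>t\<in>{0..<1::real}. haar k j (phi h i t) = haar k j t)"
proof -
  have A1: "\<forall>t\<in>{0..<1::real}. haar h i (phi h i t)
        = (haar (h + 1) (2 * i - 1) t + haar (h + 1) (2 * i) t) / sqrt 2"
    using part123[OF hi] by simp
  have A2: "\<forall>t\<in>{0..<1::real}. haar (h + 1) (2 * i - 1) (phi h i t)
        = (sqrt 2 * haar h i t + haar (h + 1) (2 * i - 1) t - haar (h + 1) (2 * i) t) / 2"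
    using part123[OF hi] by simp
  have A3: "\<forall>t\<in>{0..<1::real}. haar (h + 1) (2 * i) (phi h i t)
        = (sqrt 2 * haar h i t - haar (h + 1) (2 * i - 1) t + haar (h + 1) (2 * i) t) / 2"
    using part123[OF hi] by simp
  have B: "\<forall>(k, j)\<in>S1 h i. \<forall>t\<in>{0..<1::real}.
        haar k j (phi h i t) = haar k (j + 2 ^ (k - h - 2)) t"
  proof (intro ballI, clarify)
    fix k j t
    assume "(k, j) \<in> S1 h i" and "t \<in> {0..<1::real}"
    then show "haar k j (phi h i t) = haar k (j + 2 ^ (k - h - 2)) t"
      by (intro partS1[OF hi]) simp_all
  qed
  have C: "\<forall>(k, j)\<in>S2 h i. \<forall>t\<in>{0..<1::real}.
        haar k j (phi h i t) = haar k (j - 2 ^ (k - h - 2)) t"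
  proof (intro ballI, clarify)
    fix k j t
    assume "(k, j) \<in> S2 h i" and "t \<in> {0..<1::real}"
    then show "haar k j (phi h i t) = haar k (j - 2 ^ (k - h - 2)) t"
      by (intro partS2[OF hi]) simp_all
  qed
  have D: "\<forall>(k, j)\<in>dtree - ({(h, i), (h + 1, 2 * i - 1), (h + 1, 2 * i)} \<union> S1 h i \<union> S2 h i).
        \<forall>t\<in>{0..<1::real}. haar k j (phi h i t) = haar k j t"
  proof (intro ballI)
    fix x
    assume x: "x \<in> dtree - ({(h, i), (h + 1, 2 * i - 1), (h + 1, 2 * i)} \<union> S1 h i \<union> S2 h i)"
    obtain k j where kj: "x = (k, j)" by (cases x)
    have "haar k j (phi h i t) = haar k j t" if t: "t \<in> {0..<1::real}" for t
      using x t unfolding kj by (intro partR[OF hi]) simp_all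
    then show "case x of (k, j) \<Rightarrow> \<forall>t\<in>{0..<1::real}. haar k j (phi h i t) = haar k j t"
      unfolding kj by simp
  qed
  show ?thesis by (intro conjI A1 A2 A3 B C D)
qed

end
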